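(* Let $X$ be a linear topological space, $\mathbf{S}$ a family of seminorms on $X$ separating points of $X$, and $\tau$ the topology on $X$ generated by $\mathbf{S}$. Let $Y\subseteq X$ be compact in $\tau$, and let $f:Y\to Y$ be continuous with respect to $\tau$ and such that $\lim_{n\to\infty}\mathbf{s}(f^n(x)-f^n(y))=0$ for each $\mathbf{s}\in\mathbf{S}$ and each $x,y\in Y$. Then $f$ has a unique fixed point in $Y$.
   Context: The topology generated by a family of seminorms $\mathbf{S}$ has as base the sets $\{z\in X:\mathbf{s}_i(x-z)<\delta,\ i=1,\dots,k\}$ for $x\in X$, finitely many $\mathbf{s}_1,\dots,\mathbf{s}_k\in\mathbf{S}$, and $\delta>0$. $f^n$ denotes the $n$-fold iterate of $f$. *)

theory Defs
  imports "HOL-Analysis.Analysis"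
begin

definition is_seminorm :: "('a::real_vector \<Rightarrow> real) \<Rightarrow> bool" where
  "is_seminorm p \<longleftrightarrow> (\<forall>x y. p (x + y) \<le> p x + p y) \<and> (\<forall>c x. p (c *\<^sub>R x) = \<bar>c\<bar> * p x)"

definition separates_points :: "('a::real_vector \<Rightarrow> real) set \<Rightarrow> bool" where
  "separates_points S \<longleftrightarrow> (\<forall>x y. x \<noteq> y \<longrightarrow> (\<exists>s\<in>S. s (x - y) \<noteq> 0))"

definition seminorm_topology :: "('a::real_vector \<Rightarrow> real) set \<Rightarrow> 'a topology" where
  "seminorm_topology S = topology_generated_by
     {{z. \<forall>s\<in>F. s (x - z) < \<delta>} | x F \<delta>. finite F \<and> F \<subseteq> S \<and> \<delta> > 0}"

end

theory Submission
  imports Defs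
begin

lemma sn_basic:
  assumes "is_seminorm s"
  shows "s 0 = 0" "\<And>v. s (- v) = s v" "\<And>v. s v \<ge> 0"
    "\<And>a b. s (a - b) \<le> s a + s b" "\<And>a b c. s (a - c) \<le> s (a - b) + s (b - c)"
proof -
  have tri: "\<And>x y. s (x + y) \<le> s x + s y" and hom: "\<And>c x. s (c *\<^sub>R x) = \<bar>c\<bar> * s x"
    using assms unfolding is_seminorm_def by auto
  show z: "s 0 = 0" using hom[of 0 0] by simp
  show neg: "\<And>v. s (- v) = s v" using hom[of "-1"] by simp
  show "\<And>v. s v \<ge> 0"
  proof -
    fix v have "s (v + - v) \<le> s v + s (- v)" by (rule tri)
    then show "s v \<ge> 0" using z neg[of v] by simp
  qed
  show "\<And>a b. s (a - b) \<le> s a + s b" proof -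
    fix a b have "s (a + - b) \<le> s a + s (- b)" by (rule tri)
    then show "s (a - b) \<le> s a + s b" using neg[of b] by simp
  qed
  show "\<And>a b c. s (a - c) \<le> s (a - b) + s (b - c)"
  proof -
    fix a b c have "s ((a - b) + (b - c)) \<le> s (a - b) + s (b - c)" by (rule tri)
    then show "s (a - c) \<le> s (a - b) + s (b - c)" by simp
  qed
qed

lemma ball_open:
  assumes "s \<in> S" "\<delta> > 0"
  shows "openin (seminorm_topology S) {z. s (x - z) < \<delta>}"
proof -
  have "{z. s (x - z) < \<delta>} = {z. \<forall>t\<in>{s}. t (x - z) < \<delta>}" by auto
  also have "openin (seminorm_topology S) \<dots>"
    unfolding seminorm_topology_def
    by (rule topology_generated_by_Basis) (use assms in blast)
  finally show ?thesis .
qed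

theorem theorem9:
  fixes S :: "('a::real_vector \<Rightarrow> real) set"
    and Y :: "'a set"
    and f :: "'a \<Rightarrow> 'a"
  assumes "\<forall>s\<in>S. is_seminorm s"
    and "separates_points S"
    and "compactin (seminorm_topology S) Y"
    and "Y \<noteq> {}"
    and "continuous_map (subtopology (seminorm_topology S) Y) (subtopology (seminorm_topology S) Y) f"
    and "\<forall>s\<in>S. \<forall>x\<in>Y. \<forall>y\<in>Y. (\<lambda>n. s ((f ^^ n) x - (f ^^ n) y)) \<longlonglongrightarrow> 0"
  shows "\<exists>!x. x \<in> Y \<and> f x = x"
proof -
  define T where "T = seminorm_topology S"
  have YT: "Y \<subseteq> topspace T" using assms(3) unfolding T_def compactin_def by auto
  have fY: "\<And>y. y \<in> Y \<Longrightarrow> f y \<in> Y"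
    using assms(5) YT unfolding T_def continuous_map_def by auto
  have sep: "\<And>x y. (\<forall>s\<in>S. s (x - y) = 0) \<Longrightarrow> x = y"
    using assms(2) unfolding separates_points_def by blast
  obtain x0 where x0: "x0 \<in> Y" using assms(4) by blast
  define xs where "xs n = (f ^^ n) x0" for n
  have xsY: "xs n \<in> Y" for n
    by (induction n) (auto simp: xs_def x0 fY)
  have xsS: "xs (Suc n) = f (xs n)" for n by (simp add: xs_def)
  have cl: "\<exists>p\<in>Y. \<forall>U. openin T U \<and> p \<in> U \<longrightarrow> (\<forall>N. \<exists>n\<ge>N. xs n \<in> U)"
  proof (rule ccontr)
    assume "\<not> ?thesis"
    then have "\<forall>p\<in>Y. \<exists>U N. openin T U \<and> p \<in> U \<and> (\<forall>n\<ge>N. xs n \<notin> U)" by meson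
    then obtain U N where UN: "\<And>p. p \<in> Y \<Longrightarrow> openin T (U p) \<and> p \<in> U p \<and> (\<forall>n\<ge>N p. xs n \<notin> U p)"
      by metis
    have "\<exists>F. finite F \<and> F \<subseteq> U ` Y \<and> Y \<subseteq> \<Union>F"
    proof -
      have "(\<forall>V\<in>U ` Y. openin T V) \<and> Y \<subseteq> \<Union>(U ` Y)" using UN by blast
      then show ?thesis using assms(3) unfolding T_def[symmetric] compactin_def by blast
    qed
    then obtain F where F: "finite F" "F \<subseteq> U ` Y" "Y \<subseteq> \<Union>F" by blast
    then obtain P where P: "P \<subseteq> Y" "finite P" "F = U ` P"
      by (meson finite_subset_image)
    define M where "M = Max (N ` P)"
    have "xs M \<in> \<Union>F" using F xsY by blast
    then obtain p where p: "p \<in> P" "xs M \<in> U p" using P by auto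
    have "N p \<le> M" unfolding M_def using P p by auto
    then show False using UN[of p] p P by auto
  qed
  then obtain p where pY: "p \<in> Y" and pcl: "\<And>U N. openin T U \<Longrightarrow> p \<in> U \<Longrightarrow> \<exists>n\<ge>N. xs n \<in> U"
    by blast
  have "f p = p"
  proof (rule sym, rule sep, intro ballI)
    fix s assume sS: "s \<in> S"
    note sb = sn_basic[OF assms(1)[rule_format, OF sS]]
    have le3: "s (p - f p) \<le> 3 * e" if e: "e > 0" for e
    proof -
      have "openin (subtopology T Y) (Y \<inter> {z. s (f p - z) < e})"
        using ball_open[OF sS e] unfolding T_def by (simp add: openin_subtopology_Int2 inf_commute)
      then have "openin (subtopology T Y) {z \<in> topspace (subtopology T Y). f z \<in> Y \<inter> {z. s (f p - z) < e}}"
        using assms(5) unfolding T_def continuous_map_def by blast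
      then obtain V where V: "openin T V" "{z \<in> topspace (subtopology T Y). f z \<in> Y \<inter> {z. s (f p - z) < e}} = V \<inter> Y"
        unfolding openin_subtopology by blast
      define W where "W = V \<inter> {z. s (p - z) < e}"
      have fpV: "p \<in> V" using V(2) pY YT fY sb(1) e by auto
      have Wo: "openin T W" unfolding W_def using V(1) ball_open[OF sS e] T_def by auto
      have pW: "p \<in> W" unfolding W_def using fpV sb(1) e by auto
      have lim: "(\<lambda>n. s (xs n - xs (Suc n))) \<longlonglongrightarrow> 0"
      proof -
        have "(\<lambda>n. s ((f ^^ n) x0 - (f ^^ n) (f x0))) \<longlonglongrightarrow> 0"
          using assms(6) sS x0 fY by blast
        moreover have "(f ^^ n) (f x0) = xs (Suc n)" for n
          by (simp add: xs_def funpow_swap1)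
        ultimately show ?thesis by (simp add: xs_def)
      qed
      then obtain N where N: "\<And>n. n \<ge> N \<Longrightarrow> \<bar>s (xs n - xs (Suc n))\<bar> < e"
        using e lim unfolding LIMSEQ_iff by auto
      obtain n where n: "n \<ge> N" "xs n \<in> W" using pcl[OF Wo pW] by blast
      have a: "s (p - xs n) < e" using n(2) W_def by auto
      have "xs n \<in> V \<inter> Y" using n(2) xsY W_def by auto
      then have "f (xs n) \<in> {z. s (f p - z) < e}" using V(2) by blast
      then have b: "s (xs (Suc n) - f p) < e" using sb(2)[of "f p - xs (Suc n)"] xsS by simp
      have c: "s (xs n - xs (Suc n)) < e" using N[OF n(1)] by simp
      have d: "s (p - f p) \<le> s (p - xs n) + s (xs n - f p)" by (rule sb(5))
      have g: "s (xs n - f p) \<le> s (xs n - xs (Suc n)) + s (xs (Suc n) - f p)" by (rule sb(5))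
      show ?thesis using a b c d g by linarith
    qed
    have "s (p - f p) \<le> 0"
    proof (rule field_le_epsilon)
      fix e :: real assume "e > 0"
      then have "s (p - f p) \<le> 3 * (e / 3)" using le3[of "e / 3"] by simp
      then show "s (p - f p) \<le> 0 + e" by simp
    qed
    then show "s (p - f p) = 0" using sb(3)[of "p - f p"] by simp
  qed
  moreover have "x = y" if "x \<in> Y" "f x = x" "y \<in> Y" "f y = y" for x y
  proof (rule sep, intro ballI)
    fix s assume sS: "s \<in> S"
    have fx: "(f ^^ n) x = x" "(f ^^ n) y = y" for n
      by (induction n) (use that in auto)
    have "(\<lambda>n. s ((f ^^ n) x - (f ^^ n) y)) \<longlonglongrightarrow> 0" using assms(6) sS that by blast
    then show "s (x - y) = 0" by (simp add: fx LIMSEQ_const_iff)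
  qed
  ultimately show ?thesis using pY by blast
qed

end
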